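(* Let $Q$ be an anti-symmetric quiver on vertices $1,\dots,n,\tilde1,\dots,\tilde n$ with exchange matrix $(b_{ij})$. Suppose $\Sigma_Q=(\{x_1,\dots,x_n\},\{F_1^Q,\dots,F_n^Q\})$ is a valid LP seed and $\hat F_i=F_i$ for all $i\in\{1,\dots,n\}$. Let $i$ be a vertex of $Q$ such that there is no path $a\to i\to\tilde a$ for any vertex $a$. Then mutation at $i$ and $\tilde i$ in $Q$ corresponds to LP mutation of $\Sigma_Q$ at $i$, i.e. $$\Big(\{x_1,\dots,\tfrac{F_i}{x_i},\dots,x_n\},\{F_1^{\mu_i\circ\mu_{\tilde i}(Q)},\dots,F_n^{\mu_i\circ\mu_{\tilde i}(Q)}\}\Big)=\mu_i\big(\{x_1,\dots,x_n\},\{F_1^Q,\dots,F_n^Q\}\big).$$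
   Context: A quiver $Q$ (no loops) is encoded by the skew-symmetric matrix $b_{ij}=$ (number of arrows $i\to j$) $-$ (number of arrows $j\to i$); $\mu_k$ denotes Fomin–Zelevinsky quiver mutation. $Q$ on vertices $1,\dots,n,\tilde1,\dots,\tilde n$ (with $\tilde{\tilde i}=i$) is anti-symmetric if $i\to j$ iff $\tilde j\to\tilde i$ for all vertices $i,j$, and there is no arrow $i\to\tilde i$. For $j\in\{1,\dots,n\}$ set $F_j^Q=\prod_{b_{ij}+b_{\tilde ij}>0}x_i^{b_{ij}+b_{\tilde ij}}+\prod_{b_{ij}+b_{\tilde ij}<0}x_i^{-(b_{ij}+b_{\tilde ij})}$, products over $i\in\{1,\dots,n\}$, in $\mathbb{Z}[x_1,\dots,x_n]$. LP seed over $R=\mathbb{Z}$: $(\mathbf x,\mathbf F)$ with $\mathbf x$ a transcendence basis of the field and each $F_i$ an irreducible polynomial not involving $x_i$ and not equal to any $x_k$. Normalisation: $\hat F_j=F_j/\prod_{k\ne j}x_k^{a_k}$ where $a_k\ge0$ is maximal such that $F_k^{a_k}$ divides $F_j|_{x_k\leftarrow F_k/x}$ in $R[x_1,\dots,x_{k-1},x^{\pm1},x_{k+1},\dots,x_n]$. LP mutation at $i$: $x_i'=\hat F_i/x_i$, $x_j'=x_j$ ($j\ne i$); if $x_i\notin F_j$ then $F_j'=F_j$; otherwise $G_j=F_j|_{x_i\leftarrow \hat F_i|_{x_j\leftarrow0}/x_i'}$, $H_j$ = $G_j$ with all common factors with $\hat F_i|_{x_j\leftarrow0}$ divided out, and $F_j'=MH_j$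 with $M$ the unique monic Laurent monomial in the new variables such that $F_j'$ is a polynomial not divisible by any new variable. Exchange polynomials are defined up to units of $R$. *)

theory Defs
  imports "HOL-Library.Poly_Mapping" "HOL-Computational_Algebra.Factorial_Ring"
begin

text \<open>A Laurent polynomial is a finitely supported map from exponent vectors
(nat =>0 int, the exponent of x_l at l) to integer coefficients.
Variable index 0 is never used.\<close>

type_synonym lpoly = "(nat \<Rightarrow>\<^sub>0 int) \<Rightarrow>\<^sub>0 int"

definition X :: "nat \<Rightarrow> lpoly" where
  "X l = Poly_Mapping.single (Poly_Mapping.single l 1) 1"

definition Xinv :: "nat \<Rightarrow> lpoly" where
  "Xinv l = Poly_Mapping.single (Poly_Mapping.single l (-1)) 1"

definition is_poly :: "nat \<Rightarrow> lpoly \<Rightarrow> bool" where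
  "is_poly n P \<longleftrightarrow> (\<forall>m\<in>Poly_Mapping.keys P. \<forall>l. Poly_Mapping.lookup m l \<ge> 0 \<and> (l \<notin> {1..n} \<longrightarrow> Poly_Mapping.lookup m l = 0))"

text \<open>Membership in Z[x_1,..,x_{k-1},x^{+-1},x_{k+1},..,x_n] (the new variable x sits at index k).\<close>
definition is_poly_laurent_at :: "nat \<Rightarrow> nat \<Rightarrow> lpoly \<Rightarrow> bool" where
  "is_poly_laurent_at n k P \<longleftrightarrow>
     (\<forall>m\<in>Poly_Mapping.keys P. \<forall>l. (l \<noteq> k \<longrightarrow> Poly_Mapping.lookup m l \<ge> 0) \<and> (l \<notin> {1..n} \<longrightarrow> Poly_Mapping.lookup m l = 0))"

definition involves :: "nat \<Rightarrow> lpoly \<Rightarrow> bool" where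
  "involves l P \<longleftrightarrow> (\<exists>m\<in>Poly_Mapping.keys P. Poly_Mapping.lookup m l \<noteq> 0)"

text \<open>Substitution x_k <- R in P (meaningful when P has no negative power of x_k,
which is the only way it is used).\<close>
definition subst :: "nat \<Rightarrow> lpoly \<Rightarrow> lpoly \<Rightarrow> lpoly" where
  "subst k R P = (\<Sum>m\<in>Poly_Mapping.keys P.
      Poly_Mapping.single (Poly_Mapping.update k 0 m) (Poly_Mapping.lookup P m) * R ^ nat (Poly_Mapping.lookup m k))"

definition poly_unit :: "nat \<Rightarrow> lpoly \<Rightarrow> bool" where
  "poly_unit n A \<longleftrightarrow> is_poly n A \<and> (\<exists>C. is_poly n C \<and> A * C = 1)"

definition poly_irreducible :: "nat \<Rightarrow> lpoly \<Rightarrow> bool" where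
  "poly_irreducible n P \<longleftrightarrow> is_poly n P \<and> P \<noteq> 0 \<and> \<not> poly_unit n P \<and>
     (\<forall>A B. is_poly n A \<and> is_poly n B \<and> P = A * B \<longrightarrow> poly_unit n A \<or> poly_unit n B)"

definition poly_dvd :: "nat \<Rightarrow> lpoly \<Rightarrow> lpoly \<Rightarrow> bool" where
  "poly_dvd n A P \<longleftrightarrow> (\<exists>C. is_poly n C \<and> P = A * C)"

definition monic_laurent_monomial :: "lpoly \<Rightarrow> bool" where
  "monic_laurent_monomial M \<longleftrightarrow> (\<exists>m. M = Poly_Mapping.single m 1)"

definition valid_LP_seed :: "nat \<Rightarrow> (nat \<Rightarrow> lpoly) \<Rightarrow> bool" where
  "valid_LP_seed n F \<longleftrightarrow> (\<forall>i\<in>{1..n}. poly_irreducible n (F i) \<and> \<not> involves i (F i) \<and>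
      (\<forall>k\<in>{1..n}. F i \<noteq> X k \<and> F i \<noteq> - X k))"

definition norm_exp :: "nat \<Rightarrow> (nat \<Rightarrow> lpoly) \<Rightarrow> nat \<Rightarrow> nat \<Rightarrow> nat" where
  "norm_exp n F j k = (GREATEST a. \<exists>C. is_poly_laurent_at n k C \<and>
       subst k (F k * Xinv k) (F j) = F k ^ a * C)"

definition hatF :: "nat \<Rightarrow> (nat \<Rightarrow> lpoly) \<Rightarrow> nat \<Rightarrow> lpoly" where
  "hatF n F j = F j * (\<Prod>k\<in>{1..n} - {j}. Xinv k ^ norm_exp n F j k)"

text \<open>Exchange polynomials of the mutated seed are polynomials in the new
variables; we represent the new variables x_1',..,x_n' again by X 1,..,X n.
lp_mut_exch n F i j P says that P is (a representative, up to units of Z, of) F_j'.\<close>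
definition lp_mut_var :: "nat \<Rightarrow> (nat \<Rightarrow> lpoly) \<Rightarrow> nat \<Rightarrow> lpoly" where
  "lp_mut_var n F i = hatF n F i * Xinv i"

definition lp_mut_exch :: "nat \<Rightarrow> (nat \<Rightarrow> lpoly) \<Rightarrow> nat \<Rightarrow> nat \<Rightarrow> lpoly \<Rightarrow> bool" where
  "lp_mut_exch n F i j P \<longleftrightarrow>
    (if \<not> involves i (F j) then P = F j \<or> P = - F j
     else (let S = subst j 0 (hatF n F i);
               G = subst i (S * Xinv i) (F j)
           in \<exists>H K M. G = K * H \<and>
                (\<forall>p. irreducible p \<and> p dvd K \<longrightarrow> p dvd S) \<and>
                (\<forall>p. irreducible p \<and> p dvd H \<longrightarrow> \<not> p dvd S) \<and>
                monic_laurent_monomial M \<and> P = M * H \<and> is_poly n P \<and>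
                (\<forall>l\<in>{1..n}. \<not> poly_dvd n (X l) P)))"

text \<open>Vertices are the integers v with 1 <= |v| <= n; vertex k (k>0) is k and
vertex ~k is -k, so tilde is negation. A quiver is its skew-symmetric exchange
matrix B (B a b = #arrows a->b minus #arrows b->a), zero outside the vertex set.\<close>

definition vertices :: "nat \<Rightarrow> int set" where
  "vertices n = {v. 1 \<le> \<bar>v\<bar> \<and> \<bar>v\<bar> \<le> int n}"

definition quiver_matrix :: "nat \<Rightarrow> (int \<Rightarrow> int \<Rightarrow> int) \<Rightarrow> bool" where
  "quiver_matrix n B \<longleftrightarrow> (\<forall>a b. B a b = - B b a) \<and>
     (\<forall>a b. a \<notin> vertices n \<or> b \<notin> vertices n \<longrightarrow> B a b = 0)"

definition anti_symmetric_quiver :: "nat \<Rightarrow> (int \<Rightarrow> int \<Rightarrow> int) \<Rightarrow> bool" where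
  "anti_symmetric_quiver n B \<longleftrightarrow> quiver_matrix n B \<and>
     (\<forall>a\<in>vertices n. \<forall>b\<in>vertices n. B a b = B (- b) (- a)) \<and>
     (\<forall>a\<in>vertices n. B a (- a) = 0)"

definition mut :: "int \<Rightarrow> (int \<Rightarrow> int \<Rightarrow> int) \<Rightarrow> int \<Rightarrow> int \<Rightarrow> int" where
  "mut k B a b = (if a = k \<or> b = k then - B a b
      else B a b + max (B a k) 0 * max (B k b) 0 - max (- B a k) 0 * max (- B k b) 0)"

definition FQ :: "nat \<Rightarrow> (int \<Rightarrow> int \<Rightarrow> int) \<Rightarrow> nat \<Rightarrow> lpoly" where
  "FQ n B j = (\<Prod>l\<in>{1..n}. X l ^ nat (B (int l) (int j) + B (- int l) (int j)))
            + (\<Prod>l\<in>{1..n}. X l ^ nat (- (B (int l) (int j) + B (- int l) (int j))))"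

end

theory Submission
  imports Defs
begin

lemma core:
 fixes a1 a2 u v :: int
 assumes "\<not>(a1>0 \<and> a2<0)" "\<not>(a2>0\<and>a1<0)" "\<not>(u>0\<and>v>0)" "\<not>(u<0\<and>v<0)"
 shows "max (-a2) 0 * max v 0 - max a2 0 * max (-v) 0 + (max a1 0 * max u 0 - max (-a1) 0 * max (-u) 0) + (max (-a1) 0 * max v 0 - max a1 0 * max (-v) 0) + (max a2 0 * max u 0 - max (-a2) 0 * max (-u) 0) = (u+v) * (if v - u > 0 then max (-(a1+a2)) 0 else max (a1+a2) 0)"
  using assms
  apply (cases "a1 \<ge> 0"; cases "a2 \<ge> 0"; cases "u \<ge> 0"; cases "v\<ge>0"; auto simp: max_def algebra_simps)
  apply (subgoal_tac "a1 = 0 \<and> a2 = 0", simp, linarith)+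
  done




definition lmono :: "(nat \<Rightarrow>\<^sub>0 int) \<Rightarrow> lpoly" where
  "lmono m = Poly_Mapping.single m 1"

lemma mono_mult: "lmono a * lmono b = lmono (a + b)"
  by (simp add: lmono_def mult_single)

lemma mono_zero: "lmono 0 = 1"
  by (simp add: lmono_def)

fun npow :: "nat \<Rightarrow> (nat \<Rightarrow>\<^sub>0 int) \<Rightarrow> (nat \<Rightarrow>\<^sub>0 int)" where
  "npow 0 a = 0" | "npow (Suc k) a = a + npow k a"

lemma mono_pow: "lmono a ^ k = lmono (npow k a)"
  by (induction k) (auto simp: mono_zero mono_mult)

lemma lookup_npow: "Poly_Mapping.lookup (npow k a) l = int k * Poly_Mapping.lookup a l"
  by (induction k) (auto simp: lookup_add algebra_simps)

lemma mono_unit: "lmono a dvd 1"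
proof -
  have "lmono a * lmono (-a) = 1" by (simp add: mono_mult mono_zero)
  then show ?thesis by (metis dvdI)
qed

lemma lookup_mono: "Poly_Mapping.lookup (lmono a) m = (if a = m then 1 else 0)"
  by (simp add: lmono_def lookup_single)

lemma keys_binom: "Poly_Mapping.keys (lmono a + lmono b) = {a, b}"
  by (auto simp: in_keys_iff lookup_add lookup_mono split: if_splits)

lemma keys_mono: "Poly_Mapping.keys (lmono a) = {a}"
  by (simp add: lmono_def)

lemma X_pow: "X l ^ k = lmono (Poly_Mapping.single l (int k))"
proof (induction k)
  case 0 then show ?case by (simp add: mono_zero)
next
  case (Suc k)
  have "X l ^ Suc k = lmono (Poly_Mapping.single l 1) * lmono (Poly_Mapping.single l (int k))"
    using Suc by (simp add: X_def lmono_def)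
  also have "\<dots> = lmono (Poly_Mapping.single l (int (Suc k)))"
    by (simp add: mono_mult single_add[symmetric] add.commute)
  finally show ?case .
qed

lemma prod_X: "finite A \<Longrightarrow> (\<Prod>l\<in>A. X l ^ f l) = lmono (\<Sum>l\<in>A. Poly_Mapping.single l (int (f l)))"
  by (induction A rule: finite_induct) (auto simp: mono_zero X_pow mono_mult)

definition EV :: "nat \<Rightarrow> (nat \<Rightarrow> int) \<Rightarrow> (nat \<Rightarrow>\<^sub>0 int)" where
  "EV n g = (\<Sum>l\<in>{1..n}. Poly_Mapping.single l (g l))"

lemma lookup_EV: "Poly_Mapping.lookup (EV n g) l = (if l \<in> {1..n} then g l else 0)"
  by (simp add: EV_def lookup_sum lookup_single when_def)

definition cv :: "(int \<Rightarrow> int \<Rightarrow> int) \<Rightarrow> nat \<Rightarrow> nat \<Rightarrow> int" where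
  "cv B j l = B (int l) (int j) + B (- int l) (int j)"

lemma FQ_eq: "FQ n B j = lmono (EV n (\<lambda>l. int (nat (cv B j l)))) + lmono (EV n (\<lambda>l. int (nat (- cv B j l))))"
  unfolding FQ_def prod_X[OF finite_atLeastAtMost] EV_def cv_def by (rule refl)

lemma subst_superset:
  assumes "finite S" "Poly_Mapping.keys P \<subseteq> S"
  shows "subst k R P = (\<Sum>m\<in>S. Poly_Mapping.single (Poly_Mapping.update k 0 m) (Poly_Mapping.lookup P m) * R ^ nat (Poly_Mapping.lookup m k))"
  unfolding subst_def
  by (rule sum.mono_neutral_left) (use assms in \<open>auto simp: in_keys_iff\<close>)

lemma subst_add: "subst k R (P + Q) = subst k R P + subst k R Q"
proof -
  let ?S = "Poly_Mapping.keys P \<union> Poly_Mapping.keys Q"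
  have f: "finite ?S" by simp
  have "Poly_Mapping.keys (P + Q) \<subseteq> ?S" by (rule keys_add)
  then show ?thesis
    using subst_superset[OF f] 
    by (simp add: lookup_add single_add distrib_right sum.distrib)
qed

lemma subst_mono: "subst k R (lmono m) = lmono (Poly_Mapping.update k 0 m) * R ^ nat (Poly_Mapping.lookup m k)"
  by (simp add: subst_def keys_mono lmono_def)

lemma update_id: "Poly_Mapping.lookup m k = 0 \<Longrightarrow> Poly_Mapping.update k 0 m = m"
  by (rule poly_mapping_eqI) (auto simp: lookup_update)


lemma anti_skew: "anti_symmetric_quiver n B \<Longrightarrow> B a b = - B b a"
  unfolding anti_symmetric_quiver_def quiver_matrix_def by blast

lemma vert_neg: "(- a \<in> vertices n) = (a \<in> vertices n)"
  by (simp add: vertices_def)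

lemma anti_sym: assumes "anti_symmetric_quiver n B" shows "B a b = B (- b) (- a)"
proof (cases "a \<in> vertices n \<and> b \<in> vertices n")
  case True then show ?thesis using assms unfolding anti_symmetric_quiver_def by blast
next
  case False
  then have "- a \<notin> vertices n \<or> - b \<notin> vertices n" by (simp add: vert_neg)
  with False show ?thesis using assms unfolding anti_symmetric_quiver_def quiver_matrix_def by metis
qed

lemma anti_diag: assumes "anti_symmetric_quiver n B" shows "B a (- a) = 0"
proof (cases "a \<in> vertices n")
  case True then show ?thesis using assms unfolding anti_symmetric_quiver_def by blast
next
  case False
  then show ?thesis using assms unfolding anti_symmetric_quiver_def quiver_matrix_def by blast
qed

lemma vert_pos: "l \<in> {1..n} \<Longrightarrow> int l \<in> vertices n"
  by (simp add: vertices_def)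

lemma vert_negl: "l \<in> {1..n} \<Longrightarrow> - int l \<in> vertices n"
  by (simp add: vertices_def)

lemma cv_mut:
  assumes anti: "anti_symmetric_quiver n B" and i: "i \<in> {1..n}" and l: "l \<in> {1..n}"
    and j: "j \<in> {1..n}" and li: "l \<noteq> i" and ji: "j \<noteq> i"
    and hyp: "\<forall>a\<in>vertices n. \<not> (B a (int i) > 0 \<and> B (int i) (- a) > 0)"
  shows "cv (mut (int i) (mut (- int i) B)) j l = cv B j l + cv B j i * (if cv B i j > 0 then max (- cv B i l) 0 else max (cv B i l) 0)"
proof -
  define a1 where "a1 = B (int l) (int i)"
  define a2 where "a2 = B (- int l) (int i)"
  define u where "u = B (int i) (int j)"
  define v where "v = B (- int i) (int j)"
  have e1: "B (int l) (- int i) = - a2" unfolding a2_def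
    using anti_sym[OF anti, of "int l" "- int i"] anti_skew[OF anti, of "int i" "- int l"] by simp
  have e2: "B (- int l) (- int i) = - a1" unfolding a1_def
    using anti_sym[OF anti, of "- int l" "- int i"] anti_skew[OF anti, of "int i" "int l"] by simp
  have e3: "B (- int i) (int i) = 0" using anti_diag[OF anti, of "- int i"] by simp
  have e4: "B (int i) (- int i) = 0" using anti_diag[OF anti, of "int i"] by simp
  have e5: "B (int j) (int i) = - u" unfolding u_def using anti_skew[OF anti, of "int j" "int i"] by simp
  have e6: "B (- int j) (int i) = v" unfolding v_def using anti_sym[OF anti, of "- int j" "int i"] by simp
  have e7: "B (int i) (int l) = - a1" unfolding a1_def using anti_skew[OF anti, of "int i" "int l"] by simp
  have e8: "B (int i) (- int l) = - a2" unfolding a2_def using anti_skew[OF anti, of "int i" "- int l"] by simp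
  have e9: "B (int i) (- int j) = - v" unfolding v_def
    using anti_sym[OF anti, of "int i" "- int j"] anti_skew[OF anti, of "int j" "- int i"] by simp
  have h1: "\<not>(a1>0 \<and> a2<0)" using hyp vert_pos[OF l] e8 unfolding a1_def by force
  have h2: "\<not>(a2>0 \<and> a1<0)" using hyp vert_negl[OF l] e7 unfolding a2_def by force
  have h3: "\<not>(u<0 \<and> v<0)" using hyp vert_pos[OF j] e5 e9 by force
  have h4: "\<not>(u>0 \<and> v>0)" using hyp vert_negl[OF j] e6 unfolding u_def by force
  have c: "max (-a2) 0 * max v 0 - max a2 0 * max (-v) 0 + (max a1 0 * max u 0 - max (-a1) 0 * max (-u) 0) + (max (-a1) 0 * max v 0 - max a1 0 * max (-v) 0) + (max a2 0 * max u 0 - max (-a2) 0 * max (-u) 0) = (u+v) * (if v - u > 0 then max (-(a1+a2)) 0 else max (a1+a2) 0)"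
    by (rule core[OF h1 h2 h4 h3])
  have ne: "int l \<noteq> int i" "- int l \<noteq> int i" "int j \<noteq> int i" "int l \<noteq> - int i" "- int l \<noteq> - int i" "int j \<noteq> - int i" "int i \<noteq> - int i"
    using li ji i by auto
  have Mij: "mut (- int i) B (int i) (int j) = u"
    unfolding mut_def u_def using ne e4 by simp
  have Mli: "mut (- int i) B (int l) (int i) = a1"
    unfolding mut_def a1_def using ne e3 by simp
  have Mmli: "mut (- int i) B (- int l) (int i) = a2"
    unfolding mut_def a2_def using ne e3 by simp
  have Mlj: "mut (- int i) B (int l) (int j) = B (int l) (int j) + (max (-a2) 0 * max v 0 - max (- (-a2)) 0 * max (-v) 0)"
    unfolding mut_def v_def using ne e1 by simp
  have Mmlj: "mut (- int i) B (- int l) (int j) = B (- int l) (int j) + (max (-a1) 0 * max v 0 - max (- (-a1)) 0 * max (-v) 0)"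
    unfolding mut_def v_def using ne e2 by simp
  have m1: "mut (int i) (mut (- int i) B) (int l) (int j) = mut (- int i) B (int l) (int j) + (max (mut (- int i) B (int l) (int i)) 0 * max (mut (- int i) B (int i) (int j)) 0 - max (- mut (- int i) B (int l) (int i)) 0 * max (- mut (- int i) B (int i) (int j)) 0)"
    unfolding mut_def[of "int i" "mut (- int i) B"] using ne by simp
  have m2: "mut (int i) (mut (- int i) B) (- int l) (int j) = mut (- int i) B (- int l) (int j) + (max (mut (- int i) B (- int l) (int i)) 0 * max (mut (- int i) B (int i) (int j)) 0 - max (- mut (- int i) B (- int l) (int i)) 0 * max (- mut (- int i) B (int i) (int j)) 0)"
    unfolding mut_def[of "int i" "mut (- int i) B"] using ne by simp
  have cvji: "cv B j i = u + v" unfolding cv_def u_def v_def by simp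
  have cvij: "cv B i j = v - u" unfolding cv_def using e5 e6 by simp
  have cvil: "cv B i l = a1 + a2" unfolding cv_def a1_def a2_def by simp
  have lhs: "cv (mut (int i) (mut (- int i) B)) j l = mut (int i) (mut (- int i) B) (int l) (int j) + mut (int i) (mut (- int i) B) (- int l) (int j)"
    unfolding cv_def by simp
  show ?thesis
    unfolding cvji cvij cvil lhs m1 m2 Mij Mli Mmli Mlj Mmlj
    using c unfolding cv_def by simp
qed

lemma cv_mut_i:
  assumes anti: "anti_symmetric_quiver n B" and i: "i \<in> {1..n}" and ji: "j \<noteq> i"
  shows "cv (mut (int i) (mut (- int i) B)) j i = - cv B j i"
proof -
  have e3: "B (- int i) (int i) = 0" using anti_diag[OF anti, of "- int i"] by simp
  have e4: "B (int i) (- int i) = 0" using anti_diag[OF anti, of "int i"] by simp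
  have ne: "int j \<noteq> int i" "int j \<noteq> - int i" "int i \<noteq> - int i" using ji i by auto
  show ?thesis unfolding cv_def mut_def using ne e3 e4 by simp
qed

lemma cv_mut_ii:
  assumes anti: "anti_symmetric_quiver n B" and i: "i \<in> {1..n}"
  shows "cv (mut (int i) (mut (- int i) B)) i l = - cv B i l"
proof -
  have e3: "B (- int i) (int i) = 0" using anti_diag[OF anti, of "- int i"] by simp
  have e4: "B (int i) (- int i) = 0" using anti_diag[OF anti, of "int i"] by simp
  have ne: "int i \<noteq> - int i" "- int l \<noteq> int i" using i by auto
  show ?thesis unfolding cv_def mut_def using ne e3 e4 by (cases "l = i") auto
qed

lemma cv_ii: "anti_symmetric_quiver n B \<Longrightarrow> cv B i i = 0"
  unfolding cv_def using anti_skew[of n B "int i" "int i"] anti_diag[of n B "- int i"] by simp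

lemma cv_nz:
  assumes anti: "anti_symmetric_quiver n B" and i: "i \<in> {1..n}"
    and j: "j \<in> {1..n}" and ji: "j \<noteq> i"
    and hyp: "\<forall>a\<in>vertices n. \<not> (B a (int i) > 0 \<and> B (int i) (- a) > 0)"
    and nz: "cv B j i \<noteq> 0"
  shows "cv B i j \<noteq> 0"
proof -
  define u where "u = B (int i) (int j)"
  define v where "v = B (- int i) (int j)"
  have e5: "B (int j) (int i) = - u" unfolding u_def using anti_skew[OF anti, of "int j" "int i"] by simp
  have e6: "B (- int j) (int i) = v" unfolding v_def using anti_sym[OF anti, of "- int j" "int i"] by simp
  have e9: "B (int i) (- int j) = - v" unfolding v_def
    using anti_sym[OF anti, of "int i" "- int j"] anti_skew[OF anti, of "int j" "- int i"] by simp
  have h3: "\<not>(u<0 \<and> v<0)" using hyp vert_pos[OF j] e5 e9 by force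
  have h4: "\<not>(u>0 \<and> v>0)" using hyp vert_negl[OF j] e6 unfolding u_def by force
  have "u + v \<noteq> 0" using nz unfolding cv_def u_def v_def by simp
  moreover have "cv B i j = v - u" unfolding cv_def using e5 e6 by simp
  ultimately show ?thesis using h3 h4 by auto
qed

lemma involves_binom: "involves k (lmono a + lmono b) \<longleftrightarrow> (Poly_Mapping.lookup a k \<noteq> 0 \<or> Poly_Mapping.lookup b k \<noteq> 0)"
  unfolding involves_def keys_binom by simp

abbreviation pv where "pv n B j \<equiv> EV n (\<lambda>l. int (nat (cv B j l)))"
abbreviation qv where "qv n B j \<equiv> EV n (\<lambda>l. int (nat (- cv B j l)))"

lemma involves_FQ: "k \<in> {1..n} \<Longrightarrow> involves k (FQ n B j) \<longleftrightarrow> cv B j k \<noteq> 0"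
  unfolding FQ_eq involves_binom lookup_EV by auto

lemma EV_cong: "(\<And>l. l \<in> {1..n} \<Longrightarrow> f l = g l) \<Longrightarrow> EV n f = EV n g"
  unfolding EV_def by (rule sum.cong) auto

lemma is_poly_FQ: "is_poly n (FQ n B j)"
  unfolding is_poly_def FQ_eq keys_binom by (auto simp: lookup_EV)

lemma not_dvd_FQ:
  assumes l: "l \<in> {1..n}" shows "\<not> poly_dvd n (X l) (FQ n B j)"
proof
  assume "poly_dvd n (X l) (FQ n B j)"
  then obtain C where C: "is_poly n C" "FQ n B j = X l * C" unfolding poly_dvd_def by blast
  have nn: "\<forall>m\<in>Poly_Mapping.keys C. Poly_Mapping.lookup m l \<ge> 0" using C(1) unfolding is_poly_def by blast
  define d where "d = Poly_Mapping.single l (1::int)"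
  have Xl: "X l = lmono d" by (simp add: X_def lmono_def d_def)
  have dl: "Poly_Mapping.lookup d l = 1" by (simp add: d_def)
  have "lmono (- d) * FQ n B j = lmono (- d) * (lmono d * C)" by (simp only: C(2) Xl)
  also have "\<dots> = (lmono (- d) * lmono d) * C" by (simp only: mult.assoc)
  also have "\<dots> = C" by (simp add: mono_mult mono_zero)
  finally have "C = lmono (- d) * FQ n B j" by simp
  then have Ceq: "C = lmono (- d + pv n B j) + lmono (- d + qv n B j)"
    unfolding FQ_eq by (simp only: distrib_left mono_mult)
  show False
  proof (cases "cv B j l \<ge> 0")
    case True
    then have "Poly_Mapping.lookup (- d + qv n B j) l = -1"
      using l by (simp add: lookup_add lookup_minus lookup_EV dl)
    moreover have "- d + qv n B j \<in> Poly_Mapping.keys C" unfolding Ceq keys_binom by simp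
    ultimately show False using nn by fastforce
  next
    case False
    then have "Poly_Mapping.lookup (- d + pv n B j) l = -1"
      using l by (simp add: lookup_add lookup_minus lookup_EV dl)
    moreover have "- d + pv n B j \<in> Poly_Mapping.keys C" unfolding Ceq keys_binom by simp
    ultimately show False using nn by fastforce
  qed
qed

lemma nat_diff_int: "int (nat c) - int (nat (- c)) = c"
  by simp

lemma nat_diff_mult: "int (nat c) * x - int (nat (- c)) * x = c * x"
  by (cases "c \<ge> 0") auto

lemma exch_noninv:
  assumes anti: "anti_symmetric_quiver n B" and i: "i \<in> {1..n}" and j: "j \<in> {1..n}"
    and hyp: "\<forall>a\<in>vertices n. \<not> (B a (int i) > 0 \<and> B (int i) (- a) > 0)"
    and ninv: "\<not> involves i (FQ n B j)"
  shows "lp_mut_exch n (FQ n B) i j (FQ n (mut (int i) (mut (- int i) B)) j)"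
proof -
  let ?B = "mut (int i) (mut (- int i) B)"
  have c0: "cv B j i = 0" using ninv involves_FQ[OF i] by blast
  have "FQ n ?B j = FQ n B j"
  proof (cases "j = i")
    case True
    have "pv n ?B i = qv n B i" "qv n ?B i = pv n B i"
      by (auto intro!: EV_cong simp: cv_mut_ii[OF anti i])
    then show ?thesis unfolding FQ_eq True by (simp add: add.commute)
  next
    case False
    have "\<And>l. l \<in> {1..n} \<Longrightarrow> cv ?B j l = cv B j l"
    proof -
      fix l assume l: "l \<in> {1..n}"
      show "cv ?B j l = cv B j l"
      proof (cases "l = i")
        case True then show ?thesis using cv_mut_i[OF anti i False] c0 by simp
      next
        case li: False
        show ?thesis using cv_mut[OF anti i l j li False hyp] c0 by simp
      qed
    qed
    then have "pv n ?B j = pv n B j" "qv n ?B j = qv n B j"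
      by (auto intro!: EV_cong)
    then show ?thesis unfolding FQ_eq by simp
  qed
  then show ?thesis unfolding lp_mut_exch_def using ninv by simp
qed

lemma Xinv_mono: "Xinv l = lmono (Poly_Mapping.single l (-1))"
  by (simp add: Xinv_def lmono_def)

lemma lookup_pv: "j \<in> {1..n} \<Longrightarrow> Poly_Mapping.lookup (pv n B i) j = int (nat (cv B i j))"
  by (simp add: lookup_EV)

lemma lookup_qv: "j \<in> {1..n} \<Longrightarrow> Poly_Mapping.lookup (qv n B i) j = int (nat (- cv B i j))"
  by (simp add: lookup_EV)

lemma exch_inv:
  assumes anti: "anti_symmetric_quiver n B" and i: "i \<in> {1..n}" and j: "j \<in> {1..n}"
    and hyp: "\<forall>a\<in>vertices n. \<not> (B a (int i) > 0 \<and> B (int i) (- a) > 0)"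
    and hat: "hatF n (FQ n B) i = FQ n B i"
    and inv: "involves i (FQ n B j)"
  shows "lp_mut_exch n (FQ n B) i j (FQ n (mut (int i) (mut (- int i) B)) j)"
proof -
  let ?B = "mut (int i) (mut (- int i) B)"
  have cji: "cv B j i \<noteq> 0" using inv involves_FQ[OF i] by blast
  have ji: "j \<noteq> i" using cji cv_ii[OF anti] by auto
  have cij: "cv B i j \<noteq> 0" by (rule cv_nz[OF anti i j ji hyp cji])
  define e where "e = (if cv B i j > 0 then qv n B i else pv n B i)"
  have S: "subst j 0 (hatF n (FQ n B) i) = lmono e"
  proof (cases "cv B i j > 0")
    case True
    have "subst j 0 (hatF n (FQ n B) i) = lmono (Poly_Mapping.update j 0 (pv n B i)) * 0 ^ nat (cv B i j) + lmono (Poly_Mapping.update j 0 (qv n B i)) * 0 ^ nat (- cv B i j)"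
      unfolding hat FQ_eq subst_add subst_mono lookup_pv[OF j] lookup_qv[OF j] by simp
    also have "\<dots> = lmono (qv n B i)"
      using True update_id[of "qv n B i" j] lookup_qv[OF j, of B i] by simp
    finally show ?thesis using True unfolding e_def by simp
  next
    case False
    then have F: "cv B i j < 0" using cij by simp
    have "subst j 0 (hatF n (FQ n B) i) = lmono (Poly_Mapping.update j 0 (pv n B i)) * 0 ^ nat (cv B i j) + lmono (Poly_Mapping.update j 0 (qv n B i)) * 0 ^ nat (- cv B i j)"
      unfolding hat FQ_eq subst_add subst_mono lookup_pv[OF j] lookup_qv[OF j] by simp
    also have "\<dots> = lmono (pv n B i)"
      using F update_id[of "pv n B i" j] lookup_pv[OF j, of B i] by simp
    finally show ?thesis using False unfolding e_def by simp
  qed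
  define d where "d = e + Poly_Mapping.single i (-1)"
  define g1 where "g1 = Poly_Mapping.update i 0 (pv n B j) + npow (nat (cv B j i)) d"
  define g2 where "g2 = Poly_Mapping.update i 0 (qv n B j) + npow (nat (- cv B j i)) d"
  have G: "subst i (lmono e * Xinv i) (FQ n B j) = lmono g1 + lmono g2"
    unfolding FQ_eq subst_add subst_mono lookup_pv[OF i] lookup_qv[OF i] Xinv_mono mono_mult mono_pow
      g1_def g2_def d_def by simp
  have el: "Poly_Mapping.lookup e l = (if l \<in> {1..n} then (if cv B i j > 0 then max (- cv B i l) 0 else max (cv B i l) 0) else 0)" for l
    unfolding e_def by (auto simp: lookup_EV max_def)
  have ei: "Poly_Mapping.lookup e i = 0" using el[of i] cv_ii[OF anti, of i] by simp
  have key: "pv n ?B j - g1 + g2 = qv n ?B j"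
  proof (rule poly_mapping_eqI)
    fix l
    show "Poly_Mapping.lookup (pv n ?B j - g1 + g2) l = Poly_Mapping.lookup (qv n ?B j) l"
    proof (cases "l \<in> {1..n}")
      case False
      then have li: "i \<noteq> l" using i by auto
      have e0: "Poly_Mapping.lookup e l = 0" using el[of l] False by auto
      show ?thesis using False li
        by (auto simp add: lookup_add lookup_minus lookup_EV g1_def g2_def d_def lookup_npow lookup_update e0 lookup_single_not_eq)
    next
      case l: True
      show ?thesis
      proof (cases "l = i")
        case True
        have c': "cv ?B j i = - cv B j i" by (rule cv_mut_i[OF anti i ji])
        have "Poly_Mapping.lookup (pv n ?B j - g1 + g2) l = int (nat (cv ?B j i)) - (int (nat (cv B j i)) * (0 - 1)) + int (nat (- cv B j i)) * (0 - 1)"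
          using True i by (simp add: lookup_add lookup_minus lookup_EV g1_def g2_def d_def lookup_npow lookup_update ei lookup_single)
        also have "\<dots> = int (nat (- cv ?B j i))" unfolding c' by simp
        finally show ?thesis using True i by (simp add: lookup_EV)
      next
        case li: False
        have c': "cv ?B j l = cv B j l + cv B j i * (if cv B i j > 0 then max (- cv B i l) 0 else max (cv B i l) 0)"
          by (rule cv_mut[OF anti i l j li ji hyp])
        define E where "E = (if cv B i j > 0 then max (- cv B i l) 0 else max (cv B i l) 0)"
        have "Poly_Mapping.lookup (pv n ?B j - g1 + g2) l = int (nat (cv ?B j l)) - (int (nat (cv B j l)) + int (nat (cv B j i)) * E) + (int (nat (- cv B j l)) + int (nat (- cv B j i)) * E)"
          using li l by (simp add: lookup_add lookup_minus lookup_EV g1_def g2_def d_def lookup_npow lookup_update el lookup_single E_def)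
        also have "\<dots> = int (nat (cv ?B j l)) - cv B j l - (int (nat (cv B j i)) * E - int (nat (- cv B j i)) * E)"
          by simp
        also have "\<dots> = int (nat (- cv ?B j l))" unfolding nat_diff_mult c' E_def[symmetric] by simp
        finally show ?thesis using l by (simp add: lookup_EV)
      qed
    qed
  qed
  have P: "FQ n ?B j = lmono (pv n ?B j - g1) * (lmono g1 + lmono g2)"
    unfolding FQ_eq distrib_left mono_mult key[symmetric] by simp
  have Mex: "\<exists>M. monic_laurent_monomial M \<and> FQ n ?B j = M * (lmono g1 + lmono g2)"
    using P unfolding monic_laurent_monomial_def lmono_def by blast
  have unitS: "\<not> (irreducible p \<and> p dvd lmono e)" for p :: lpoly
    using mono_unit[of e] irreducible_not_unit dvd_trans by blast
  have unit1: "\<not> (irreducible p \<and> p dvd (1::lpoly))" for p :: lpoly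
    using irreducible_not_unit by blast
  show ?thesis
    unfolding lp_mut_exch_def Let_def S G
    using inv
    apply simp
    apply (rule exI[of _ "lmono g1 + lmono g2"], rule exI[of _ 1])
    using Mex unitS unit1 is_poly_FQ[of n ?B j] not_dvd_FQ[of _ n ?B j]
    by auto
qed

theorem proposition4p8:
  fixes n :: nat and B :: "int \<Rightarrow> int \<Rightarrow> int" and i :: nat
  assumes "anti_symmetric_quiver n B"
    and "valid_LP_seed n (FQ n B)"
    and "\<forall>k\<in>{1..n}. hatF n (FQ n B) k = FQ n B k"
    and "i \<in> {1..n}"
    and "\<forall>a\<in>vertices n. \<not> (B a (int i) > 0 \<and> B (int i) (- a) > 0)"
  shows "lp_mut_var n (FQ n B) i = FQ n B i * Xinv i \<and>
    (\<forall>j\<in>{1..n}. lp_mut_exch n (FQ n B) i j (FQ n (mut (int i) (mut (- int i) B)) j))"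
proof -
  have hat: "hatF n (FQ n B) i = FQ n B i" using assms(3,4) by blast
  have "lp_mut_exch n (FQ n B) i j (FQ n (mut (int i) (mut (- int i) B)) j)" if j: "j \<in> {1..n}" for j
  proof (cases "involves i (FQ n B j)")
    case True
    show ?thesis by (rule exch_inv[OF assms(1) assms(4) j assms(5) hat True])
  next
    case False
    show ?thesis by (rule exch_noninv[OF assms(1) assms(4) j assms(5) False])
  qed
  then show ?thesis unfolding lp_mut_var_def hat by blast
qed

end
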